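(* Under the assumption $\det\gamma_k\ne0$ for all $k\ge1$, for all $\lambda\in\mathbb R$ and $k\ge1$, $$\Big(\overleftarrow{\prod_{j=1}^k}G(i\lambda)\alpha_j\Big)\,\Pi\,G(i\lambda)\,\mho\,G(i\lambda)^*=\gamma_k\,G(i\lambda)^*\,\beta_{k+1}\overleftarrow{\prod_{j=1}^{k+1}}G(i\lambda)\alpha_j,$$ where $\overleftarrow{\prod_{j=1}^k}X_j:=X_kX_{k-1}\cdots X_1$ is the leftward-ordered product.
   Context: Let $m,N$ be even, $\mathbf J=\begin{bmatrix}0&1\\-1&0\end{bmatrix}$, $J:=I_{m/2}\otimes\mathbf J$. Let $\Theta\in\mathbb R^{N\times N}$ be antisymmetric and nonsingular, $\mathcal A\in\mathbb R^{N\times N}$ Hurwitz, $\mathcal B\in\mathbb R^{N\times m}$, $\mathcal C\in\mathbb R^{r\times N}$ with $\mathcal A\Theta+\Theta\mathcal A^T+\mho=0$, where $\mho:=\mathcal BJ\mathcal B^T$; $\Pi:=\mathcal C^T\mathcal C$; $G(s):=(sI_N-\mathcal A)^{-1}$; $(\cdot)^*$ is conjugate transpose. For a matrix $U$, $\mathbf L_{\mathcal A}(U):=\int_0^\infty e^{t\mathcal A}Ue^{t\mathcal A^T}dt$. Recursion: $\alpha_1=\gamma_0=\Theta$, $\beta_0=I_N$, $\beta_1=\Theta^{-1}\mho\Theta^{-1}$, and for $k\ge1$: $\gamma_k=\mathbf L_{\mathcal A}(\alpha_k\Pi^{\delta_{k1}}\gamma_{k-1})$, $\alpha_{k+1}=\gamma_k\beta_k$,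 $\beta_{k+1}=\gamma_k^{-1}\alpha_k\Pi^{\delta_{k1}}\gamma_{k-1}\gamma_k^{-1}$, where $\Pi^{\delta_{k1}}$ equals $\Pi$ if $k=1$ and $I_N$ otherwise. *)

theory Defs
  imports "HOL-Analysis.Analysis" "HOL-Library.Numeral_Type"
begin

(* Matrices are HOL-Analysis matrices: 'a^'c^'r is an 'r x 'c matrix (rows indexed by 'r). *)

primrec mpow :: "real^'n^'n \<Rightarrow> nat \<Rightarrow> real^'n^'n" where
  "mpow M 0 = mat 1"
| "mpow M (Suc k) = M ** mpow M k"

definition mexp :: "real \<Rightarrow> real^'n^'n \<Rightarrow> real^'n^'n" where
  "mexp t M = (\<Sum>k. ((t ^ k) / fact k) *\<^sub>R mpow M k)"

definition LA :: "real^'n^'n \<Rightarrow> real^'n^'n \<Rightarrow> real^'n^'n" where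
  "LA A U = integral {0..} (\<lambda>t. mexp t A ** U ** mexp t (transpose A))"

definition cmat :: "real^'c^'r \<Rightarrow> complex^'c^'r" where
  "cmat M = (\<chi> i j. complex_of_real (M $ i $ j))"

definition ctrans :: "complex^'c^'r \<Rightarrow> complex^'r^'c" where
  "ctrans M = (\<chi> i j. cnj (M $ j $ i))"

definition hurwitz :: "real^'n^'n \<Rightarrow> bool" where
  "hurwitz A \<longleftrightarrow> (\<forall>z::complex. det (mat z - cmat A) = 0 \<longrightarrow> Re z < 0)"

definition Jb :: "real^2^2" where
  "Jb = (\<chi> a b. if a = 0 \<and> b = 1 then 1 else if a = 1 \<and> b = 0 then -1 else 0)"

(* J = I_{m/2} \<otimes> bold J, with index set 'k \<times> 2, CARD('k) = m/2 *)
definition Jm :: "real^('k::finite \<times> 2)^('k \<times> 2)" where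
  "Jm = (\<chi> p q. if fst p = fst q then Jb $ snd p $ snd q else 0)"

definition Gres :: "real^'n^'n \<Rightarrow> complex \<Rightarrow> complex^'n^'n" where
  "Gres A s = matrix_inv (mat s - cmat A)"

(* abg A Th Pm Mho k = (alpha_{k+1}, beta_{k+1}, gamma_k) *)
primrec abg :: "real^'n^'n \<Rightarrow> real^'n^'n \<Rightarrow> real^'n^'n \<Rightarrow> real^'n^'n \<Rightarrow> nat
     \<Rightarrow> (real^'n^'n) \<times> (real^'n^'n) \<times> (real^'n^'n)" where
  "abg A Th Pm Mho 0 = (Th, matrix_inv Th ** Mho ** matrix_inv Th, Th)"
| "abg A Th Pm Mho (Suc k) =
     (let (al, be, ga) = abg A Th Pm Mho k;
          P = (if k = 0 then Pm else mat 1);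
          ga' = LA A (al ** P ** ga)
      in (ga' ** be, matrix_inv ga' ** al ** P ** ga ** matrix_inv ga', ga'))"

definition alpha where "alpha A Th Pm Mho j = fst (abg A Th Pm Mho (j - 1))"
definition beta where "beta A Th Pm Mho j = fst (snd (abg A Th Pm Mho (j - 1)))"
definition gamma where "gamma A Th Pm Mho k = snd (snd (abg A Th Pm Mho k))"

primrec lprod :: "(nat \<Rightarrow> complex^'n^'n) \<Rightarrow> nat \<Rightarrow> complex^'n^'n" where
  "lprod X 0 = mat 1"
| "lprod X (Suc k) = X (Suc k) ** lprod X k"

end

theory Submission
  imports Defs "HOL-Computational_Algebra.Fundamental_Theorem_Algebra" "HOL-Real_Asymp.Real_Asymp"
begin

lemma norm_sq_mat: "(norm (M::real^'m^'n))^2 = (\<Sum>i\<in>UNIV. \<Sum>j\<in>UNIV. (M$i$j)^2)"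
  by (simp only: power2_norm_eq_inner) (simp add: inner_vec_def power2_eq_square)

lemma norm_sq_vec: "(norm (x::real^'m))^2 = (\<Sum>j\<in>UNIV. (x$j)^2)"
  by (simp only: power2_norm_eq_inner) (simp add: inner_vec_def power2_eq_square)

lemma norm_mm: fixes A :: "real^'m^'n" and B :: "real^'p^'m"
  shows "norm (A ** B) \<le> norm A * norm B"
proof -
  have e: "((A**B)$i$j)^2 \<le> (norm (A$i))^2 * (norm (column j B))^2" for i j
  proof -
    have "(A**B)$i$j = A$i \<bullet> column j B"
      by (simp add: matrix_matrix_mult_def inner_vec_def column_def mult.commute)
    moreover have "\<bar>A$i \<bullet> column j B\<bar> \<le> norm (A$i) * norm (column j B)"
      by (rule Cauchy_Schwarz_ineq2)
    ultimately have "\<bar>(A**B)$i$j\<bar> \<le> norm (A$i) * norm (column j B)" by simp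
    then have "\<bar>(A**B)$i$j\<bar>^2 \<le> (norm (A$i) * norm (column j B))^2"
      by (rule power_mono) simp
    then show ?thesis by (simp add: power_mult_distrib)
  qed
  have "(norm (A**B))^2 = (\<Sum>i\<in>UNIV. \<Sum>j\<in>UNIV. ((A**B)$i$j)^2)" by (rule norm_sq_mat)
  also have "\<dots> \<le> (\<Sum>i\<in>UNIV. \<Sum>j\<in>UNIV. (norm (A$i))^2 * (norm (column j B))^2)"
    by (intro sum_mono e)
  also have "\<dots> = (\<Sum>i\<in>UNIV. (norm (A$i))^2) * (\<Sum>j\<in>UNIV. (norm (column j B))^2)"
    by (simp add: sum_product)
  also have "(\<Sum>i\<in>UNIV. (norm (A$i))^2) = (norm A)^2"
    by (simp add: norm_sq_mat norm_sq_vec)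
  also have "(\<Sum>j\<in>UNIV. (norm (column j B))^2) = (norm B)^2"
    unfolding norm_sq_mat norm_sq_vec column_def by (simp add: sum.swap[of "\<lambda>i j. (B$i$j)^2"])
  finally have "(norm (A**B))^2 \<le> (norm A * norm B)^2" by (simp add: power_mult_distrib)
  then show ?thesis by (rule power2_le_imp_le) simp
qed

lemma mm_add_rdistrib: "((A::'a::semiring_1^'m^'n) + B) ** C = A ** C + B ** C"
  by (simp add: matrix_matrix_mult_def vec_eq_iff sum.distrib distrib_right)
lemma mm_diff_rdistrib: "((A::'a::ring_1^'m^'n) - B) ** C = A ** C - B ** C"
  by (simp add: matrix_matrix_mult_def vec_eq_iff sum_subtractf left_diff_distrib)
lemma mm_diff_ldistrib: "(C::'a::ring_1^'m^'n) ** (A - B) = C ** A - C ** B"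
  by (simp add: matrix_matrix_mult_def vec_eq_iff sum_subtractf right_diff_distrib)
lemma mm_add_ldistrib: "(C::'a::semiring_1^'m^'n) ** (A + B) = C ** A + C ** B"
  by (simp add: matrix_matrix_mult_def vec_eq_iff sum.distrib distrib_left)

lemma bl_mult_left: "bounded_linear (\<lambda>X::real^'p^'m. (M::real^'m^'n) ** X)"
proof (rule bounded_linear_intro[where K="norm M"])
  show "M ** (x + y) = M ** x + M ** y" for x y by (rule matrix_add_ldistrib)
  show "M ** (r *\<^sub>R x) = r *\<^sub>R (M ** x)" for r x by (simp add: matrix_scalar_ac scalar_matrix_assoc)
  show "norm (M ** x) \<le> norm x * norm M" for x using norm_mm[of M x] by (simp add: mult.commute)
qed

lemma bl_mult_right: "bounded_linear (\<lambda>X::real^'m^'n. X ** (M::real^'p^'m))"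
proof (rule bounded_linear_intro[where K="norm M"])
  show "(x + y) ** M = x ** M + y ** M" for x y by (rule mm_add_rdistrib)
  show "(r *\<^sub>R x) ** M = r *\<^sub>R (x ** M)" for r x by (simp add: scalar_matrix_assoc)
  show "norm (x ** M) \<le> norm x * norm M" for x using norm_mm[of x M] by simp
qed

lemma bl_entry: "bounded_linear (\<lambda>X::real^'m^'n. X $ i $ j)"
  using bounded_linear_compose[OF bounded_linear_vec_nth[of j] bounded_linear_vec_nth[of i]] by simp

lemma bl_transpose: "bounded_linear (transpose :: real^'m^'n \<Rightarrow> real^'n^'m)"
proof (rule bounded_linear_intro[where K=1])
  show "transpose (x + y) = transpose x + transpose (y::real^'m^'n)" for x y
    by (simp add: transpose_def vec_eq_iff)
  show "transpose (r *\<^sub>R x) = r *\<^sub>R transpose (x::real^'m^'n)" for r x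
    by (simp add: transpose_def vec_eq_iff)
  show "norm (transpose x) \<le> norm (x::real^'m^'n) * 1" for x
    by (simp add: norm_eq_sqrt_inner inner_vec_def transpose_def sum.swap[of "\<lambda>i j. x$i$j * x$i$j"])
qed

lemma mpow_Suc': "mpow M (Suc k) = mpow M k ** M"
  by (induction k) (simp_all add: matrix_mul_assoc)

lemma mpow_comm: "M ** mpow M k = mpow M k ** M"
  using mpow_Suc' by simp

lemma mpow_transpose: "mpow (transpose M) k = transpose (mpow M k)"
proof (induction k)
  case (Suc k)
  have "mpow (transpose M) (Suc k) = transpose M ** transpose (mpow M k)" using Suc by simp
  also have "\<dots> = transpose (mpow M (Suc k))" by (simp only: mpow_Suc' matrix_transpose_mul)
  finally show ?case .
qed (simp add: transpose_mat)

lemma norm_mpow: "norm (mpow M k) \<le> norm (mat 1 :: real^'n^'n) * norm (M::real^'n^'n) ^ k"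
proof (induction k)
  case 0 then show ?case by simp
next
  case (Suc k)
  have "norm (mpow M (Suc k)) \<le> norm M * norm (mpow M k)" using norm_mm[of M "mpow M k"] by simp
  also have "\<dots> \<le> norm M * (norm (mat 1 :: real^'n^'n) * norm M ^ k)"
    by (rule mult_left_mono[OF Suc]) simp
  finally show ?case by (simp add: algebra_simps)
qed

lemma summable_mexp: "summable (\<lambda>k. ((t ^ k) / fact k) *\<^sub>R mpow (M::real^'n^'n) k)"
proof (rule summable_norm_cancel, rule summable_comparison_test)
  let ?c = "norm (mat 1 :: real^'n^'n)"
  show "summable (\<lambda>k. ?c * (inverse (fact k) * (\<bar>t\<bar> * norm M) ^ k))"
    by (intro summable_mult summable_exp)
  show "\<exists>N. \<forall>n\<ge>N. norm (norm (((t ^ n) / fact n) *\<^sub>R mpow M n)) \<le> ?c * (inverse (fact n) * (\<bar>t\<bar> * norm M) ^ n)"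
  proof (intro exI allI impI)
    fix n
    have "norm (((t ^ n) / fact n) *\<^sub>R mpow M n) = (\<bar>t\<bar>^n / fact n) * norm (mpow M n)"
      by (simp add: power_abs)
    also have "\<dots> \<le> (\<bar>t\<bar>^n / fact n) * (?c * norm M ^ n)"
      by (rule mult_left_mono[OF norm_mpow]) simp
    also have "\<dots> = ?c * (inverse (fact n) * (\<bar>t\<bar> * norm M) ^ n)"
      by (simp add: power_mult_distrib field_simps)
    finally show "norm (norm (((t ^ n) / fact n) *\<^sub>R mpow M n)) \<le> ?c * (inverse (fact n) * (\<bar>t\<bar> * norm M) ^ n)"
      by simp
  qed
qed

lemma mexp_lin: "bounded_linear L \<Longrightarrow> L (mexp t M) = (\<Sum>k. ((t ^ k) / fact k) *\<^sub>R L (mpow M k))"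
  unfolding mexp_def by (simp add: bounded_linear.suminf[OF _ summable_mexp] linear_simps)

lemma mexp_entry: "mexp t M $ i $ j = (\<Sum>k. (mpow M k $ i $ j / fact k) * t ^ k)"
  using mexp_lin[OF bl_entry, of t M i j] by (simp add: mult.commute)

lemma mexp_comm: "M ** mexp t M = mexp t M ** M"
proof -
  have "M ** mexp t M = (\<Sum>k. (t^k/fact k) *\<^sub>R (M ** mpow M k))" by (rule mexp_lin[OF bl_mult_left])
  moreover have "mexp t M ** M = (\<Sum>k. (t^k/fact k) *\<^sub>R (mpow M k ** M))" by (rule mexp_lin[OF bl_mult_right])
  ultimately show ?thesis by (simp add: mpow_comm)
qed

lemma mexp_transpose: "mexp t (transpose M) = transpose (mexp t M)"
  using mexp_lin[OF bl_transpose, of t M] by (simp add: mexp_def mpow_transpose)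

lemma mexp_0: "mexp 0 M = mat 1"
proof -
  have "(\<lambda>k. ((0 ^ k) / fact k) *\<^sub>R mpow M k) = (\<lambda>k. if k = 0 then mpow M 0 else 0)"
    by (auto simp: fun_eq_iff)
  moreover have "(\<lambda>k. if k = 0 then mpow M 0 else 0) sums mat 1"
    using sums_single[of 0 "mpow M"] by (simp add: if_distrib cong: if_cong)
  ultimately show ?thesis unfolding mexp_def by (simp add: sums_iff)
qed

lemma mexp_entry_deriv: "((\<lambda>t. mexp t M $ i $ j) has_field_derivative ((M ** mexp t M) $ i $ j)) (at t)"
proof -
  define c where "c k = mpow M k $ i $ j / fact k" for k
  have s: "summable (\<lambda>k. c k * y ^ k)" for y
  proof -
    have "summable (\<lambda>k. ((y ^ k) / fact k) *\<^sub>R mpow M k $ i $ j)"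
      using bounded_linear.summable[OF bl_entry summable_mexp] by simp
    then show ?thesis by (simp add: c_def mult.commute)
  qed
  have "((\<lambda>x. \<Sum>n. c n * x ^ n) has_field_derivative (\<Sum>n. diffs c n * t ^ n)) (at t)"
    by (rule termdiffs_strong_converges_everywhere[OF s])
  moreover have "(\<lambda>x. \<Sum>n. c n * x ^ n) = (\<lambda>t. mexp t M $ i $ j)"
    by (simp add: fun_eq_iff mexp_entry c_def)
  moreover have "(\<Sum>n. diffs c n * t ^ n) = (M ** mexp t M) $ i $ j"
  proof -
    have "(M ** mexp t M) $ i $ j = (\<Sum>k. ((t ^ k) / fact k) * (M ** mpow M k) $ i $ j)"
      using mexp_lin[OF bounded_linear_compose[OF bl_entry bl_mult_left[of M]], of t M] by simp
    moreover have "diffs c n * t ^ n = ((t ^ n) / fact n) * (M ** mpow M n) $ i $ j" for n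
    proof -
      have "diffs c n = real (Suc n) * ((M ** mpow M n) $ i $ j / (real (Suc n) * fact n))"
        unfolding diffs_def c_def by (simp only: mpow.simps fact_Suc of_nat_mult)
      also have "\<dots> = (M ** mpow M n) $ i $ j / fact n"
        by (simp del: of_nat_Suc)
      finally show ?thesis by simp
    qed
    ultimately show ?thesis by simp
  qed
  ultimately show ?thesis by simp
qed

lemma mexp_deriv: "((\<lambda>t. mexp t M) has_vector_derivative (M ** mexp t M)) (at t within S)"
proof -
  have "((\<lambda>t. mexp t M) has_derivative (\<lambda>h. h *\<^sub>R (M ** mexp t M))) (at t within S)"
  proof (subst has_derivative_componentwise_within, intro ballI)
    fix b :: "real^'a^'a" assume "b \<in> Basis"
    then obtain p q where b: "b = axis p (axis q 1)" by (auto simp: Basis_vec_def)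
    have "((\<lambda>t. mexp t M $ p $ q) has_derivative (*) ((M ** mexp t M) $ p $ q)) (at t within S)"
      using has_field_derivative_at_within[OF mexp_entry_deriv]
      by (simp add: has_field_derivative_def)
    moreover have "(\<lambda>h. h *\<^sub>R (M ** mexp t M) \<bullet> b) = (*) ((M ** mexp t M) $ p $ q)"
      by (auto simp: b inner_axis fun_eq_iff)
    ultimately show "((\<lambda>x. mexp x M \<bullet> b) has_derivative (\<lambda>h. h *\<^sub>R (M ** mexp t M) \<bullet> b)) (at t within S)"
      by (simp add: b inner_axis)
  qed
  then show ?thesis by (simp add: has_vector_derivative_def)
qed

lemma ode_decay:
  fixes z z' :: "real \<Rightarrow> complex" and \<mu> :: complex
  assumes d: "\<And>t. t \<ge> 0 \<Longrightarrow> (z has_vector_derivative z' t) (at t)"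
    and b: "\<And>t. t \<ge> 0 \<Longrightarrow> cmod (z' t - \<mu> * z t) \<le> C * exp (- \<epsilon> * t)"
    and e: "\<epsilon> > 0" "Re \<mu> \<le> -2*\<epsilon>"
    and t: "t \<ge> 0"
  shows "cmod (z t) \<le> (cmod (z 0) + C/\<epsilon>) * exp (- \<epsilon> * t)"
proof -
  have C: "C \<ge> 0"
  proof -
    have "cmod (z' 0 - \<mu> * z 0) \<le> C" using b[of 0] by simp
    then show ?thesis using norm_ge_zero[of "z' 0 - \<mu> * z 0"] by linarith
  qed
  define a where "a = - Re \<mu>"
  have a: "a - \<epsilon> \<ge> \<epsilon>" using e by (simp add: a_def)
  define v where "v s = exp (- (\<mu> * of_real s)) * z s" for s
  define v' where "v' s = exp (- (\<mu> * of_real s)) * (z' s - \<mu> * z s)" for s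
  have dv: "(v has_vector_derivative v' s) (at s)" if s: "s \<ge> 0" for s
  proof -
    have "((\<lambda>w. exp (- (\<mu> * w))) has_field_derivative (- \<mu> * exp (- (\<mu> * of_real s)))) (at (of_real s))"
      by (auto intro!: derivative_eq_intros)
    from has_vector_derivative_real_field[OF this]
    have "((\<lambda>s. exp (- (\<mu> * of_real s))) has_vector_derivative (- \<mu> * exp (- (\<mu> * of_real s)))) (at s)" .
    from has_vector_derivative_mult[OF this d[OF s]]
    show ?thesis unfolding v_def v'_def by (simp add: algebra_simps)
  qed
  have bv: "norm (v' s) \<le> C * exp ((a - \<epsilon>) * s)" if s: "s \<ge> 0" for s
  proof -
    have "norm (v' s) = exp (a * s) * cmod (z' s - \<mu> * z s)"
      by (simp add: v'_def norm_mult norm_exp_eq_Re a_def)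
    also have "\<dots> \<le> exp (a * s) * (C * exp (- \<epsilon> * s))" using b[OF s] by simp
    also have "\<dots> = C * exp ((a - \<epsilon>) * s)" by (simp add: algebra_simps flip: exp_add)
    finally show ?thesis .
  qed
  define \<phi> where "\<phi> s = C * exp ((a - \<epsilon>) * s) / (a - \<epsilon>)" for s
  have d\<phi>: "(\<phi> has_vector_derivative C * exp ((a - \<epsilon>) * s)) (at s)" for s
  proof -
    have "(\<phi> has_real_derivative C * exp ((a - \<epsilon>) * s)) (at s)"
      unfolding \<phi>_def using a e by (auto intro!: derivative_eq_intros)
    then show ?thesis by (simp add: has_real_derivative_iff_has_vector_derivative)
  qed
  have vt: "norm (v t - v 0) \<le> C * exp ((a - \<epsilon>) * t) / \<epsilon>"
  proof (cases "t = 0")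
    case True then show ?thesis using C e by simp
  next
    case False
    then have t0: "0 < t" using t by simp
    have "norm (v t - v 0) \<le> \<phi> t - \<phi> 0"
    proof (rule differentiable_bound_general[OF t0])
      show "continuous_on {0..t} v"
        by (rule continuous_at_imp_continuous_on) (metis atLeastAtMost_iff has_vector_derivative_continuous dv)
      show "continuous_on {0..t} \<phi>"
        by (rule continuous_at_imp_continuous_on) (metis has_vector_derivative_continuous d\<phi>)
      show "\<And>x. 0 < x \<Longrightarrow> x < t \<Longrightarrow> (v has_vector_derivative v' x) (at x)" using dv by simp
      show "\<And>x. 0 < x \<Longrightarrow> x < t \<Longrightarrow> (\<phi> has_vector_derivative C * exp ((a - \<epsilon>) * x)) (at x)"
        using d\<phi> by simp
      show "\<And>x. 0 < x \<Longrightarrow> x < t \<Longrightarrow> norm (v' x) \<le> C * exp ((a - \<epsilon>) * x)" using bv by simp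
    qed
    also have "\<dots> \<le> \<phi> t" using C a e by (simp add: \<phi>_def)
    also have "\<dots> \<le> C * exp ((a - \<epsilon>) * t) / \<epsilon>"
      unfolding \<phi>_def using C a e by (intro divide_left_mono) (auto intro: mult_pos_pos)
    finally show ?thesis .
  qed
  have zt: "z t = exp (\<mu> * of_real t) * v t"
    by (simp add: v_def mult.assoc flip: exp_add)
  have "cmod (z t) = exp (- a * t) * norm (v t)"
    by (simp add: zt norm_mult norm_exp_eq_Re a_def)
  also have "\<dots> \<le> exp (- a * t) * (cmod (z 0) + C * exp ((a - \<epsilon>) * t) / \<epsilon>)"
  proof (rule mult_left_mono)
    have "norm (v t) \<le> norm (v 0) + norm (v t - v 0)" by (rule norm_triangle_sub)
    moreover have "v 0 = z 0" by (simp add: v_def)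
    ultimately show "norm (v t) \<le> cmod (z 0) + C * exp ((a - \<epsilon>) * t) / \<epsilon>" using vt by simp
  qed simp
  also have "\<dots> = exp (- a * t) * cmod (z 0) + C / \<epsilon> * exp (- \<epsilon> * t)"
    by (simp add: algebra_simps flip: exp_add)
  also have "\<dots> \<le> exp (- \<epsilon> * t) * cmod (z 0) + C / \<epsilon> * exp (- \<epsilon> * t)"
    using a e t by (intro add_right_mono mult_right_mono) (auto intro: mult_right_mono)
  also have "\<dots> = (cmod (z 0) + C/\<epsilon>) * exp (- \<epsilon> * t)" by (simp add: algebra_simps)
  finally show ?thesis .
qed

lemma if0_mult: "(if P then a else 0) * (b::'a::semiring_0) = (if P then a * b else 0)" by simp
lemma mult_if0: "(b::'a::semiring_0) * (if P then a else 0) = (if P then b * a else 0)" by simp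

lemma cmat_mult: "cmat (A ** B) = cmat A ** cmat B"
  by (simp add: cmat_def matrix_matrix_mult_def vec_eq_iff)
lemma cmat_add: "cmat (A + B) = cmat A + cmat B"
  by (simp add: cmat_def vec_eq_iff)
lemma cmat_diff: "cmat (A - B) = cmat A - cmat B"
  by (simp add: cmat_def vec_eq_iff)
lemma cmat_uminus: "cmat (- A) = - cmat A"
  by (simp add: cmat_def vec_eq_iff)
lemma cmat_zero: "cmat 0 = 0"
  by (simp add: cmat_def vec_eq_iff)
lemma cmat_mat: "cmat (mat c) = mat (of_real c)"
  by (simp add: cmat_def vec_eq_iff mat_def)
lemma cmat_scaleR: "cmat (c *\<^sub>R M) = mat (of_real c) ** cmat M"
  by (simp add: cmat_def vec_eq_iff mat_def matrix_matrix_mult_def if0_mult)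
lemma cmat_sum: "finite S \<Longrightarrow> cmat (sum f S) = (\<Sum>i\<in>S. cmat (f i))"
  by (induction S rule: finite_induct) (simp_all add: cmat_zero cmat_add)
lemma cmat_entry: "cmat M $ i $ j = of_real (M $ i $ j)"
  by (simp add: cmat_def)

lemma mat_left: "(mat c ** X) = (\<chi> i j. c * X $ i $ j)"
  by (simp add: vec_eq_iff mat_def matrix_matrix_mult_def if0_mult mult_if0)
lemma mat_right: "(X ** mat c) = (\<chi> i j. X $ i $ j * (c::'a::comm_semiring_1))"
  by (simp add: vec_eq_iff mat_def matrix_matrix_mult_def if0_mult mult_if0)
lemma mat_comm: "mat c ** X = X ** mat (c::'a::comm_semiring_1)"
  by (simp add: mat_left mat_right mult.commute)
lemma mat_0: "mat 0 = 0"
  by (simp add: vec_eq_iff mat_def)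
lemma mm_zero_right: "X ** 0 = (0::'a::semiring_1^'n^'m)"
  by (simp add: vec_eq_iff matrix_matrix_mult_def)
lemma mm_zero_left: "0 ** X = (0::'a::semiring_1^'n^'m)"
  by (simp add: vec_eq_iff matrix_matrix_mult_def)
lemma mat_mult_mat: "mat a ** mat b = mat (a * (b::'a::comm_semiring_1))"
  by (simp add: mat_left vec_eq_iff) (simp add: mat_def)
lemma mat_add_mat: "mat a + mat b = mat (a + (b::'a::semiring_1))"
  by (simp add: vec_eq_iff mat_def)

definition ceval :: "complex poly \<Rightarrow> complex^'n^'n \<Rightarrow> complex^'n^'n" where
  "ceval p X = fold_coeffs (\<lambda>a Y. mat a + X ** Y) p 0"

lemma ceval_0[simp]: "ceval 0 X = 0"
  by (simp add: ceval_def)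

lemma ceval_pCons: "ceval (pCons a p) X = mat a + X ** ceval p X"
proof (cases "a = 0 \<and> p = 0")
  case True then show ?thesis by (simp add: mat_0 mm_zero_right)
next
  case False
  then have "fold_coeffs (\<lambda>a Y. mat a + X ** Y) (pCons a p) = (\<lambda>Y. mat a + X ** Y) \<circ> fold_coeffs (\<lambda>a Y. mat a + X ** Y) p"
    by (auto intro: fold_coeffs_pCons_coeff_not_0_eq fold_coeffs_pCons_not_0_0_eq)
  then show ?thesis by (simp add: ceval_def)
qed

lemma ceval_add: "ceval (p + q) X = ceval p X + ceval q X"
proof (induction p arbitrary: q rule: pCons_induct)
  case 0 then show ?case by simp
next
  case (pCons a p)
  obtain b q' where q: "q = pCons b q'" by (cases q)
  show ?case using pCons.IH[of q']
    by (simp add: q ceval_pCons mm_add_ldistrib flip: mat_add_mat)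
qed

lemma ceval_smult: "ceval (smult c p) X = mat c ** ceval p X"
proof (induction p rule: pCons_induct)
  case 0 then show ?case by (simp add: mm_zero_right)
next
  case (pCons a p)
  have "mat c ** (X ** ceval p X) = X ** (mat c ** ceval p X)"
    by (simp add: mat_comm flip: matrix_mul_assoc)
  then show ?case using pCons.IH
    by (simp add: ceval_pCons mm_add_ldistrib flip: mat_mult_mat)
qed

lemma ceval_mult: "ceval (p * q) X = ceval p X ** ceval q X"
proof (induction p rule: pCons_induct)
  case 0 then show ?case by (simp add: mm_zero_left)
next
  case (pCons a p)
  show ?case using pCons.IH
    by (simp add: ceval_pCons ceval_add ceval_smult mat_0 mm_add_rdistrib matrix_mul_assoc)
qed

lemma ceval_linear: "ceval [:- r, 1:] X = X - mat r"
proof -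
  have "mat (- r) = - (mat r :: complex^'n^'n)" by (simp add: vec_eq_iff mat_def)
  then show ?thesis by (simp add: ceval_pCons mm_zero_right matrix_mul_rid)
qed

lemma ceval_sum: "finite S \<Longrightarrow> ceval (sum f S) X = (\<Sum>i\<in>S. ceval (f i) X)"
  by (induction S rule: finite_induct) (simp_all add: ceval_add)

lemma ceval_monom: "ceval (monom c k) (cmat A) = mat c ** cmat (mpow A k)"
proof -
  have "ceval (monom 1 k) (cmat A) = cmat (mpow A k)"
  proof (induction k)
    case 0 then show ?case by (simp add: one_pCons ceval_pCons mm_zero_right cmat_mat)
  next
    case (Suc k) then show ?case by (simp add: monom_Suc ceval_pCons mat_0 cmat_mult)
  qed
  moreover have "monom c k = smult c (monom 1 k)" by (simp add: smult_monom)
  ultimately show ?thesis by (simp add: ceval_smult)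
qed

definition Qf :: "complex list \<Rightarrow> complex^'n^'n \<Rightarrow> complex^'n^'n" where
  "Qf xs X = foldr (\<lambda>\<mu> Y. (X - mat \<mu>) ** Y) xs (mat 1)"

lemma Qf_Nil[simp]: "Qf [] X = mat 1" by (simp add: Qf_def)
lemma Qf_Cons[simp]: "Qf (x # xs) X = (X - mat x) ** Qf xs X" by (simp add: Qf_def)

lemma ceval_prod_list: "ceval (prod_list (map (\<lambda>x. [:-x, 1:]) xs)) X = Qf xs X"
proof (induction xs)
  case Nil then show ?case by (simp add: one_pCons ceval_pCons mm_zero_right)
next
  case (Cons a xs)
  have "ceval (prod_list (map (\<lambda>x. [:-x, 1:]) (a # xs))) X = ceval ([:-a, 1:] * prod_list (map (\<lambda>x. [:-x, 1:]) xs)) X"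
    by simp
  also have "\<dots> = (X - mat a) ** Qf xs X"
    by (simp only: ceval_mult ceval_linear Cons.IH)
  finally show ?case by simp
qed

lemma lin_comm: "(X - mat a) ** (X - mat b) = (X - mat b) ** (X - mat (a::complex))"
proof -
  have 1: "X ** mat b = mat b ** X" "X ** mat a = mat a ** X" by (rule mat_comm[symmetric])+
  show ?thesis
    by (simp only: mm_diff_ldistrib mm_diff_rdistrib 1 mat_mult_mat mult.commute[of a b]) (simp add: algebra_simps)
qed

lemma Qf_comm: "(X - mat a) ** Qf ys X = Qf ys X ** (X - mat a)"
proof (induction ys)
  case Nil then show ?case by simp
next
  case (Cons b ys)
  have "(X - mat a) ** Qf (b # ys) X = ((X - mat a) ** (X - mat b)) ** Qf ys X"
    by (simp add: matrix_mul_assoc)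
  also have "\<dots> = (X - mat b) ** ((X - mat a) ** Qf ys X)"
    by (simp add: lin_comm matrix_mul_assoc)
  also have "\<dots> = Qf (b # ys) X ** (X - mat a)"
    by (simp add: Cons matrix_mul_assoc)
  finally show ?case .
qed

lemma Qf_split: "Qf xs X = Qf (filter P xs) X ** Qf (filter (\<lambda>x. \<not> P x) xs) X"
proof (induction xs)
  case Nil then show ?case by simp
next
  case (Cons a xs)
  show ?case
  proof (cases "P a")
    case True then show ?thesis using Cons by (simp add: matrix_mul_assoc)
  next
    case False
    have "Qf (a # xs) X = (X - mat a) ** (Qf (filter P xs) X ** Qf (filter (\<lambda>x. \<not> P x) xs) X)"
      using Cons by simp
    also have "\<dots> = ((X - mat a) ** Qf (filter P xs) X) ** Qf (filter (\<lambda>x. \<not> P x) xs) X"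
      by (simp only: matrix_mul_assoc)
    also have "\<dots> = (Qf (filter P xs) X ** (X - mat a)) ** Qf (filter (\<lambda>x. \<not> P x) xs) X"
      by (simp only: Qf_comm)
    also have "\<dots> = Qf (filter P xs) X ** ((X - mat a) ** Qf (filter (\<lambda>x. \<not> P x) xs) X)"
      by (simp only: matrix_mul_assoc)
    finally show ?thesis using False by simp
  qed
qed

lemma invertible_lin: "det (mat a - X) \<noteq> 0 \<Longrightarrow> invertible (X - mat (a::complex))"
proof -
  assume "det (mat a - X) \<noteq> 0"
  then have "invertible (mat a - X)" by (simp add: invertible_det_nz)
  moreover have "invertible (mat (-1) :: complex^'n^'n)"
    unfolding invertible_def by (intro exI[of _ "mat (-1)"]) (simp add: mat_mult_mat)
  ultimately have "invertible ((mat a - X) ** mat (-1))" by (rule invertible_mult)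
  moreover have "(mat a - X) ** mat (-1) = X - mat a"
    unfolding mat_right by (simp add: vec_eq_iff mat_def)
  ultimately show ?thesis by simp
qed

lemma invertible_Qf: "\<forall>x\<in>set xs. det (mat x - X) \<noteq> 0 \<Longrightarrow> invertible (Qf xs (X::complex^'n^'n))"
proof (induction xs)
  case Nil then show ?case unfolding invertible_def by (intro exI[of _ "mat 1"]) simp
next
  case (Cons a xs) then show ?case by (simp add: invertible_mult invertible_lin)
qed

lemma annihilator: "\<exists>q::complex poly. q \<noteq> 0 \<and> ceval q (cmat (A::real^'n^'n)) = 0"
proof -
  define D where "D = DIM(real^'n^'n)"
  show ?thesis
  proof (cases "inj_on (mpow A) {..D}")
    case False
    then obtain i j where ij: "i \<noteq> j" "mpow A i = mpow A j" unfolding inj_on_def by blast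
    define q where "q = monom (1::complex) i + monom (-1) j"
    have "coeff q i = 1" using ij by (simp add: q_def coeff_monom)
    then have "q \<noteq> 0" by auto
    moreover have "ceval q (cmat A) = 0"
      using ij by (simp add: q_def ceval_add ceval_monom) (simp add: mat_left vec_eq_iff)
    ultimately show ?thesis by blast
  next
    case True
    define S where "S = mpow A ` {..D}"
    have "card S = D + 1" using True by (simp add: S_def card_image)
    then have "\<not> independent S" using independent_bound[of S] by (auto simp: D_def)
    then have "\<exists>t u. finite t \<and> t \<subseteq> S \<and> (\<Sum>v\<in>t. u v *\<^sub>R v) = 0 \<and> (\<exists>v\<in>t. u v \<noteq> 0)"
      by (simp only: dependent_explicit not_not)
    then obtain t u v0 where t: "finite t" "t \<subseteq> S" "(\<Sum>v\<in>t. u v *\<^sub>R v) = 0" and v0: "v0 \<in> t" "u v0 \<noteq> 0"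
      by (elim exE conjE bexE) (rule that)
    define idx where "idx v = the_inv_into {..D} (mpow A) v" for v
    have idx: "v \<in> S \<Longrightarrow> mpow A (idx v) = v" for v
      using True by (auto simp: idx_def S_def the_inv_into_f_f)
    define q where "q = (\<Sum>v\<in>t. monom (complex_of_real (u v)) (idx v))"
    have "coeff q (idx v0) = (\<Sum>v\<in>t. if v = v0 then complex_of_real (u v) else 0)"
      unfolding q_def coeff_sum coeff_monom
    proof (rule sum.cong)
      fix v assume "v \<in> t"
      then have "idx v = idx v0 \<longleftrightarrow> v = v0" using idx t(2) v0(1) by (metis subsetD)
      then show "(if idx v = idx v0 then complex_of_real (u v) else 0) = (if v = v0 then complex_of_real (u v) else 0)"
        by simp
    qed simp
    also have "\<dots> = complex_of_real (u v0)" using t(1) v0(1) by simp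
    finally have "q \<noteq> 0" using v0(2) by auto
    moreover have "ceval q (cmat A) = 0"
    proof -
      have "ceval q (cmat A) = (\<Sum>v\<in>t. mat (complex_of_real (u v)) ** cmat (mpow A (idx v)))"
        by (simp add: q_def ceval_sum[OF t(1)] ceval_monom)
      also have "\<dots> = (\<Sum>v\<in>t. cmat (u v *\<^sub>R v))"
        using idx t(2) by (intro sum.cong) (auto simp: cmat_scaleR)
      also have "\<dots> = cmat (\<Sum>v\<in>t. u v *\<^sub>R v)" by (simp add: cmat_sum[OF t(1)])
      finally show ?thesis using t(3) by (simp add: cmat_zero)
    qed
    ultimately show ?thesis by blast
  qed
qed

lemma annihilator_eig: "\<exists>xs. (\<forall>x\<in>set xs. det (mat x - cmat A) = 0) \<and> Qf xs (cmat (A::real^'n^'n)) = 0"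
proof -
  obtain q where q: "q \<noteq> 0" "ceval q (cmat A) = 0" using annihilator by blast
  obtain xs where xs: "mset xs = proots q" using ex_mset by blast
  define c where "c = lead_coeff q"
  have c: "c \<noteq> 0" using q(1) by (simp add: c_def)
  have "smult (lead_coeff q) (\<Prod>x\<in>#proots q. [:- x, 1:]) = q" by (rule complex_poly_decompose_multiset)
  moreover have "(\<Prod>x\<in>#proots q. [:- x, 1:]) = prod_list (map (\<lambda>x. [:-x, 1:]) xs)"
    by (simp flip: xs prod_mset_prod_list mset_map)
  ultimately have eq: "q = smult c (prod_list (map (\<lambda>x. [:-x, 1:]) xs))" by (simp add: c_def)
  have "ceval q (cmat A) = mat c ** Qf xs (cmat A)"
    by (simp only: eq ceval_smult ceval_prod_list)
  with q have "mat (inverse c) ** (mat c ** Qf xs (cmat A)) = 0"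
    by (simp add: mm_zero_right)
  moreover have "mat (inverse c) ** (mat c ** Qf xs (cmat A)) = Qf xs (cmat A)"
  proof -
    have "inverse c * c = 1" using c by simp
    then show ?thesis by (simp only: matrix_mul_assoc mat_mult_mat matrix_mul_lid)
  qed
  ultimately have Q0: "Qf xs (cmat A) = 0" by simp
  let ?P = "\<lambda>x. det (mat x - cmat A) = 0"
  define Q1 where "Q1 = Qf (filter ?P xs) (cmat A)"
  define Q2 where "Q2 = Qf (filter (\<lambda>x. \<not> ?P x) xs) (cmat A)"
  have Q12: "Q1 ** Q2 = 0"
    using Q0 Qf_split[of xs "cmat A" ?P] by (simp add: Q1_def Q2_def)
  have "invertible Q2" unfolding Q2_def by (rule invertible_Qf) simp
  then obtain B where B: "Q2 ** B = mat 1"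
    unfolding invertible_def by blast
  have "Q1 = Q1 ** (Q2 ** B)" by (simp add: B)
  also have "\<dots> = (Q1 ** Q2) ** B" by (simp only: matrix_mul_assoc)
  also have "\<dots> = 0" by (simp add: Q12 mm_zero_left)
  finally show ?thesis unfolding Q1_def by (intro exI[of _ "filter ?P xs"]) simp
qed

lemma Y_entry_deriv:
  "((\<lambda>t. (cmat (mexp t A) ** N) $ i $ j) has_vector_derivative
      ((cmat A ** (cmat (mexp t A) ** N)) $ i $ j)) (at t)"
proof -
  have e: "(\<lambda>t. (cmat (mexp t A) ** N) $ i $ j) = (\<lambda>t. \<Sum>k\<in>UNIV. complex_of_real (mexp t A $ i $ k) * N $ k $ j)"
    by (simp add: matrix_matrix_mult_def cmat_def)
  have "((\<lambda>t. \<Sum>k\<in>UNIV. complex_of_real (mexp t A $ i $ k) * N $ k $ j) has_vector_derivative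
         (\<Sum>k\<in>UNIV. complex_of_real ((A ** mexp t A) $ i $ k) * N $ k $ j)) (at t)"
    by (intro has_vector_derivative_sum has_vector_derivative_mult_left has_vector_derivative_of_real mexp_entry_deriv)
  moreover have "(\<Sum>k\<in>UNIV. complex_of_real ((A ** mexp t A) $ i $ k) * N $ k $ j) = (cmat A ** (cmat (mexp t A) ** N)) $ i $ j"
    by (simp add: matrix_mul_assoc flip: cmat_mult) (simp add: matrix_matrix_mult_def cmat_def)
  ultimately show ?thesis by (simp add: e)
qed

lemma chain_step:
  assumes b: "\<forall>t\<ge>0. \<forall>i j. cmod (((cmat A - mat \<mu>) ** (cmat (mexp t A) ** N)) $ i $ j) \<le> C * exp (- \<epsilon> * t)"
    and e: "\<epsilon> > 0" "Re \<mu> \<le> -2*\<epsilon>"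
  shows "\<exists>C'. \<forall>t\<ge>0. \<forall>i j. cmod ((cmat (mexp t A) ** N) $ i $ j) \<le> C' * exp (- \<epsilon> * t)"
proof -
  define K where "K = (\<Sum>i\<in>UNIV. \<Sum>j\<in>UNIV. cmod (N $ i $ j)) + C / \<epsilon>"
  have "cmod ((cmat (mexp t A) ** N) $ i $ j) \<le> K * exp (- \<epsilon> * t)" if t: "t \<ge> 0" for t i j
  proof -
    let ?z = "\<lambda>t. (cmat (mexp t A) ** N) $ i $ j"
    let ?z' = "\<lambda>t. (cmat A ** (cmat (mexp t A) ** N)) $ i $ j"
    have "cmod (?z t) \<le> (cmod (?z 0) + C/\<epsilon>) * exp (- \<epsilon> * t)"
    proof (rule ode_decay[OF _ _ e t])
      show "\<And>t. 0 \<le> t \<Longrightarrow> (?z has_vector_derivative ?z' t) (at t)" by (rule Y_entry_deriv)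
      show "cmod (?z' s - \<mu> * ?z s) \<le> C * exp (- \<epsilon> * s)" if "0 \<le> s" for s
      proof -
        have "?z' s - \<mu> * ?z s = ((cmat A - mat \<mu>) ** (cmat (mexp s A) ** N)) $ i $ j"
          by (simp add: mm_diff_rdistrib mat_left)
        then show ?thesis using b that by simp
      qed
    qed
    moreover have "?z 0 = N $ i $ j" by (simp add: mexp_0 cmat_mat)
    moreover have "cmod (N $ i $ j) \<le> (\<Sum>i\<in>UNIV. \<Sum>j\<in>UNIV. cmod (N $ i $ j))"
    proof -
      have "cmod (N $ i $ j) \<le> (\<Sum>j\<in>UNIV. cmod (N $ i $ j))" by (rule member_le_sum) auto
      also have "\<dots> \<le> (\<Sum>i\<in>UNIV. \<Sum>j\<in>UNIV. cmod (N $ i $ j))"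
        by (rule member_le_sum[where f="\<lambda>i. \<Sum>j\<in>UNIV. cmod (N $ i $ j)"]) (auto intro: sum_nonneg)
      finally show ?thesis .
    qed
    ultimately show ?thesis unfolding K_def
      by (smt (verit, ccfv_SIG) exp_gt_zero mult_right_mono)
  qed
  then show ?thesis by blast
qed

lemma Y_lin_comm: "cmat (mexp t A) ** ((cmat A - mat \<mu>) ** W) = (cmat A - mat \<mu>) ** (cmat (mexp t A) ** W)"
proof -
  have c: "cmat (mexp t A) ** cmat A = cmat A ** cmat (mexp t A)"
    by (simp add: mexp_comm flip: cmat_mult)
  have "cmat (mexp t A) ** ((cmat A - mat \<mu>) ** W) = (cmat (mexp t A) ** (cmat A - mat \<mu>)) ** W"
    by (simp only: matrix_mul_assoc)
  also have "cmat (mexp t A) ** (cmat A - mat \<mu>) = (cmat A - mat \<mu>) ** cmat (mexp t A)"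
  proof -
    have 2: "cmat (mexp t A) ** mat \<mu> = mat \<mu> ** cmat (mexp t A)" by (rule mat_comm[symmetric])
    show ?thesis by (simp only: mm_diff_ldistrib mm_diff_rdistrib c 2)
  qed
  finally show ?thesis by (simp only: matrix_mul_assoc)
qed

lemma chain:
  assumes "\<forall>\<mu>\<in>set \<mu>s. Re \<mu> \<le> -2*\<epsilon>" "\<epsilon> > 0"
    and "\<forall>t\<ge>0. \<forall>i j. cmod ((cmat (mexp t A) ** (Qf \<mu>s (cmat A) ** N)) $ i $ j) \<le> C * exp (- \<epsilon> * t)"
  shows "\<exists>C'. \<forall>t\<ge>0. \<forall>i j. cmod ((cmat (mexp t A) ** N) $ i $ j) \<le> C' * exp (- \<epsilon> * t)"
  using assms
proof (induction \<mu>s arbitrary: C)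
  case Nil then show ?case by auto
next
  case (Cons \<mu> rest)
  have "\<forall>t\<ge>0. \<forall>i j. cmod (((cmat A - mat \<mu>) ** (cmat (mexp t A) ** (Qf rest (cmat A) ** N))) $ i $ j) \<le> C * exp (- \<epsilon> * t)"
    using Cons.prems(3) by (simp add: Y_lin_comm flip: matrix_mul_assoc)
  from chain_step[OF this Cons.prems(2)] Cons.prems(1)
  obtain C' where "\<forall>t\<ge>0. \<forall>i j. cmod ((cmat (mexp t A) ** (Qf rest (cmat A) ** N)) $ i $ j) \<le> C' * exp (- \<epsilon> * t)"
    by auto
  then show ?case using Cons.IH Cons.prems(1,2) by auto
qed

lemma norm_le_entries: "norm (M::real^'n^'m) \<le> (\<Sum>i\<in>UNIV. \<Sum>j\<in>UNIV. \<bar>M $ i $ j\<bar>)"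
proof -
  have "norm M \<le> (\<Sum>i\<in>UNIV. norm (M $ i))"
    unfolding norm_vec_def by (rule L2_set_le_sum) simp
  also have "\<dots> \<le> (\<Sum>i\<in>UNIV. \<Sum>j\<in>UNIV. \<bar>M $ i $ j\<bar>)"
    by (intro sum_mono norm_le_l1_cart)
  finally show ?thesis .
qed

lemma hurwitz_decay:
  assumes "hurwitz A"
  shows "\<exists>C \<epsilon>. \<epsilon> > 0 \<and> (\<forall>t\<ge>0. norm (mexp t A) \<le> C * exp (- \<epsilon> * t))"
proof -
  obtain \<mu>s where mu: "\<forall>x\<in>set \<mu>s. det (mat x - cmat A) = 0" "Qf \<mu>s (cmat A) = 0"
    using annihilator_eig by blast
  have neg: "\<forall>x\<in>set \<mu>s. Re x < 0" using mu(1) assms by (auto simp: hurwitz_def)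
  define \<epsilon> where "\<epsilon> = (if \<mu>s = [] then 1 else Min ((\<lambda>x. - Re x) ` set \<mu>s) / 2)"
  have e: "\<epsilon> > 0" using neg by (auto simp: \<epsilon>_def)
  have e2: "\<forall>x\<in>set \<mu>s. Re x \<le> -2*\<epsilon>"
  proof
    fix x assume x: "x \<in> set \<mu>s"
    have "Min ((\<lambda>x. - Re x) ` set \<mu>s) \<le> - Re x"
      by (rule Min_le) (simp, rule imageI[OF x])
    moreover have "\<epsilon> = Min ((\<lambda>x. - Re x) ` set \<mu>s) / 2"
      unfolding \<epsilon>_def by (rule if_not_P) (use x in auto)
    ultimately show "Re x \<le> -2*\<epsilon>" by linarith
  qed
  have "\<forall>t\<ge>0. \<forall>i j. cmod ((cmat (mexp t A) ** (Qf \<mu>s (cmat A) ** mat 1)) $ i $ j) \<le> 0 * exp (- \<epsilon> * t)"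
    by (simp add: mu(2) mm_zero_left mm_zero_right)
  from chain[OF e2 e this] obtain C' where
    C': "\<forall>t\<ge>0. \<forall>i j. cmod ((cmat (mexp t A) ** mat 1) $ i $ j) \<le> C' * exp (- \<epsilon> * t)" by blast
  have "norm (mexp t A) \<le> (real CARD('a) * real CARD('a) * C') * exp (- \<epsilon> * t)" if t: "t \<ge> 0" for t
  proof -
    have "norm (mexp t A) \<le> (\<Sum>i\<in>UNIV. \<Sum>j\<in>UNIV. \<bar>mexp t A $ i $ j\<bar>)" by (rule norm_le_entries)
    also have "\<dots> \<le> (\<Sum>i\<in>(UNIV::'a set). \<Sum>j\<in>(UNIV::'a set). C' * exp (- \<epsilon> * t))"
    proof (intro sum_mono)
      fix i j
      show "\<bar>mexp t A $ i $ j\<bar> \<le> C' * exp (- \<epsilon> * t)"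
        using C' t by (auto simp: cmat_def) 
    qed
    also have "\<dots> = (real CARD('a) * real CARD('a) * C') * exp (- \<epsilon> * t)" by simp
    finally show ?thesis .
  qed
  then show ?thesis using e by blast
qed

lemma bb_mm: "bounded_bilinear ((**) :: real^'m^'n \<Rightarrow> real^'p^'m \<Rightarrow> real^'p^'n)"
proof (rule bounded_bilinear.intro)
  show "\<exists>K. \<forall>a b. norm (a ** b) \<le> norm a * norm (b::real^'p^'m) * K"
    by (rule exI[of _ 1]) (simp add: norm_mm)
qed (simp_all add: mm_add_rdistrib mm_add_ldistrib scalar_matrix_assoc matrix_scalar_ac)

lemma norm_transpose_le: "norm (transpose (x::real^'m^'n)) \<le> norm x"
  by (simp add: norm_eq_sqrt_inner inner_vec_def transpose_def sum.swap[of "\<lambda>i j. x$i$j * x$i$j"])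

lemma norm_transpose: "norm (transpose (x::real^'m^'n)) = norm x"
  using norm_transpose_le[of x] norm_transpose_le[of "transpose x"] by (simp add: transpose_transpose)

lemma expdecay_integrable:
  fixes f :: "real \<Rightarrow> real^'m^'n"
  assumes c: "continuous_on {a..} f" and b: "\<And>t. t \<ge> a \<Longrightarrow> norm (f t) \<le> K * exp (- \<delta> * t)"
    and d: "\<delta> > 0"
  shows "f integrable_on {a..}" "norm (integral {a..} f) \<le> K * (exp (- \<delta> * a) / \<delta>)"
proof -
  have g: "((\<lambda>t. K * exp (- \<delta> * t)) has_integral K * (exp (- \<delta> * a) / \<delta>)) {a..}"
    by (rule has_integral_mult_right[OF has_integral_exp_minus_to_infinity[OF d]])
  have S: "{a..} \<in> sets lebesgue" by simp
  show fi: "f integrable_on {a..}"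
    by (rule measurable_bounded_by_integrable_imp_integrable[OF continuous_imp_measurable_on_sets_lebesgue[OF c S] _ _ S])
       (use g b in auto)
  have "norm (integral {a..} f) \<le> integral {a..} (\<lambda>t. K * exp (- \<delta> * t))"
    by (rule integral_norm_bound_integral[OF fi]) (use g b in auto)
  also have "\<dots> = K * (exp (- \<delta> * a) / \<delta>)" using g by (rule integral_unique)
  finally show "norm (integral {a..} f) \<le> K * (exp (- \<delta> * a) / \<delta>)" .
qed

lemma mexp_cont: "continuous_on S (\<lambda>t. mexp t M)"
  by (rule continuous_at_imp_continuous_on) (metis has_vector_derivative_continuous mexp_deriv)

lemma lyapunov:
  assumes h: "hurwitz A"
  shows "A ** LA A U + LA A U ** transpose A + U = 0"
proof -
  obtain C \<epsilon> where e: "\<epsilon> > 0" and C: "\<And>t. t \<ge> 0 \<Longrightarrow> norm (mexp t A) \<le> C * exp (- \<epsilon> * t)"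
    using hurwitz_decay[OF h] by blast
  define F where "F t = mexp t A ** U ** mexp t (transpose A)" for t
  define F' where "F' t = A ** F t + F t ** transpose A" for t
  define \<delta> where "\<delta> = 2 * \<epsilon>"
  have \<delta>: "\<delta> > 0" using e by (simp add: \<delta>_def)
  define K where "K = C * C * norm U"
  have bF: "norm (F t) \<le> K * exp (- \<delta> * t)" if t: "t \<ge> 0" for t
  proof -
    have C0: "0 \<le> C * exp (- \<epsilon> * t)" using C[OF t] by (rule order_trans[OF norm_ge_zero])
    have "norm (F t) \<le> norm (mexp t A ** U) * norm (mexp t (transpose A))"
      unfolding F_def by (rule norm_mm)
    also have "\<dots> \<le> norm (mexp t A) * norm U * norm (mexp t (transpose A))"
      by (intro mult_right_mono norm_mm) simp
    also have "norm (mexp t (transpose A)) = norm (mexp t A)" by (simp add: mexp_transpose norm_transpose)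
    also have "norm (mexp t A) * norm U * norm (mexp t A) \<le> (C * exp (- \<epsilon> * t)) * norm U * (C * exp (- \<epsilon> * t))"
      using C[OF t] C0 by (intro mult_mono) (auto intro: mult_nonneg_nonneg)
    also have "\<dots> = K * exp (- \<delta> * t)" by (simp add: K_def \<delta>_def algebra_simps flip: exp_add)
    finally show ?thesis .
  qed
  have bF': "norm (F' t) \<le> (2 * norm A * K) * exp (- \<delta> * t)" if t: "t \<ge> 0" for t
  proof -
    have "norm (F' t) \<le> norm (A ** F t) + norm (F t ** transpose A)"
      unfolding F'_def by (rule norm_triangle_ineq)
    also have "\<dots> \<le> norm A * norm (F t) + norm (F t) * norm (transpose A)"
      by (intro add_mono norm_mm)
    also have "\<dots> = 2 * norm A * norm (F t)" by (simp add: norm_transpose)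
    also have "\<dots> \<le> 2 * norm A * (K * exp (- \<delta> * t))" by (rule mult_left_mono[OF bF[OF t]]) simp
    finally show ?thesis by simp
  qed
  have dF: "(F has_vector_derivative F' t) (at t within S)" for t S
  proof -
    have d1: "((\<lambda>t. mexp t A ** U) has_vector_derivative (A ** mexp t A) ** U) (at t within S)"
      by (rule bounded_linear.has_vector_derivative[OF bl_mult_right mexp_deriv])
    have "(F has_vector_derivative (mexp t A ** U) ** (transpose A ** mexp t (transpose A)) + ((A ** mexp t A) ** U) ** mexp t (transpose A)) (at t within S)"
      unfolding F_def by (rule bounded_bilinear.has_vector_derivative[OF bb_mm d1 mexp_deriv])
    moreover have "(mexp t A ** U) ** (transpose A ** mexp t (transpose A)) + ((A ** mexp t A) ** U) ** mexp t (transpose A) = F' t"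
      by (simp add: F'_def F_def mexp_comm matrix_mul_assoc add.commute)
    ultimately show ?thesis by simp
  qed
  have cF: "continuous_on S F" for S
    by (rule continuous_at_imp_continuous_on) (metis has_vector_derivative_continuous dF)
  have cF': "continuous_on S F'" for S
    unfolding F'_def
    by (intro continuous_intros bounded_linear.continuous_on[OF bl_mult_left cF] bounded_linear.continuous_on[OF bl_mult_right cF])
  have iF: "F integrable_on {0..}" using expdecay_integrable(1)[OF cF bF \<delta>] by simp
  have iF': "F' integrable_on {T..}" "norm (integral {T..} F') \<le> (2 * norm A * K) * (exp (- \<delta> * T) / \<delta>)" if "T \<ge> 0" for T
    using expdecay_integrable[OF cF' _ \<delta>, of T "2 * norm A * K"] bF' that by auto
  define I where "I = integral {0..} F'"
  have I: "norm (I + U) \<le> (K + 2 * norm A * K / \<delta>) * exp (- \<delta> * T)" if T: "T \<ge> 0" for T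
  proof -
    have "(F' has_integral (F T - F 0)) {0..T}"
      by (rule fundamental_theorem_of_calculus[OF T]) (rule dF)
    moreover have "(F' has_integral integral {T..} F') {T..}" using iF'(1)[OF T] by (rule integrable_integral)
    moreover have "negligible ({0..T} \<inter> {T..})"
    proof -
      have "{0..T} \<inter> {T..} = {T}" using T by auto
      then show ?thesis by simp
    qed
    ultimately have "(F' has_integral (F T - F 0 + integral {T..} F')) ({0..T} \<union> {T..})"
      by (rule has_integral_Un)
    moreover have "{0..T} \<union> {T..} = {0..}" using T by auto
    ultimately have "I = F T - F 0 + integral {T..} F'" unfolding I_def by (simp add: integral_unique)
    moreover have "F 0 = U" by (simp add: F_def mexp_0)
    ultimately have "I + U = F T + integral {T..} F'" by simp
    then have "norm (I + U) \<le> norm (F T) + norm (integral {T..} F')" by (simp add: norm_triangle_ineq)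
    also have "\<dots> \<le> K * exp (- \<delta> * T) + (2 * norm A * K) * (exp (- \<delta> * T) / \<delta>)"
      by (intro add_mono bF T iF'(2))
    finally show ?thesis by (simp add: algebra_simps)
  qed
  have "((\<lambda>T. (K + 2 * norm A * K / \<delta>) * exp (- \<delta> * T)) \<longlongrightarrow> 0) at_top"
    using \<delta> by real_asymp
  moreover have "eventually (\<lambda>T. norm (I + U) \<le> (K + 2 * norm A * K / \<delta>) * exp (- \<delta> * T)) at_top"
    using eventually_ge_at_top[of "0::real"] by eventually_elim (rule I)
  ultimately have "norm (I + U) \<le> 0"
    by (intro tendsto_le[OF trivial_limit_at_top_linorder _ tendsto_const])
  then have IU: "I = - U" by (simp add: eq_neg_iff_add_eq_0)
  have "A ** LA A U + LA A U ** transpose A = integral {0..} (\<lambda>t. A ** F t) + integral {0..} (\<lambda>t. F t ** transpose A)"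
    unfolding LA_def F_def[symmetric]
    using integral_linear[OF iF bl_mult_left, of A] integral_linear[OF iF bl_mult_right, of "transpose A"]
    by (simp add: o_def)
  also have "\<dots> = I"
  proof -
    have i1: "(\<lambda>t. A ** F t) integrable_on {0..}" using integrable_linear[OF iF bl_mult_left] by (simp add: o_def)
    have i2: "(\<lambda>t. F t ** transpose A) integrable_on {0..}" using integrable_linear[OF iF bl_mult_right] by (simp add: o_def)
    show ?thesis unfolding I_def F'_def by (rule integral_add[OF i1 i2, symmetric])
  qed
  finally show ?thesis using IU by simp
qed

lemma matrix_inv_both:
  assumes "invertible M"
  shows "M ** matrix_inv M = mat 1" "matrix_inv M ** M = mat 1"
proof -
  from assms obtain M' where "M ** M' = mat 1 \<and> M' ** M = mat 1" unfolding invertible_def by blast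
  then have "M ** matrix_inv M = mat 1 \<and> matrix_inv M ** M = mat 1"
    unfolding matrix_inv_def by (rule someI)
  then show "M ** matrix_inv M = mat 1" "matrix_inv M ** M = mat 1" by auto
qed

lemma ctrans_mult: "ctrans (X ** Y) = ctrans Y ** ctrans X"
  by (simp add: ctrans_def matrix_matrix_mult_def vec_eq_iff mult.commute)
lemma ctrans_diff: "ctrans (X - Y) = ctrans X - ctrans Y"
  by (simp add: ctrans_def vec_eq_iff)
lemma ctrans_mat: "ctrans (mat c) = mat (cnj c)"
  by (simp add: ctrans_def vec_eq_iff mat_def)
lemma ctrans_cmat: "ctrans (cmat M) = cmat (transpose M)"
  by (simp add: ctrans_def cmat_def transpose_def vec_eq_iff)

lemma key1:
  fixes G Gi H Hi Y X :: "complex^'n^'n"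
  assumes "G ** Gi = mat 1" "Hi ** H = mat 1" "X = Gi ** Y + Y ** Hi"
  shows "G ** X ** H = Y ** H + G ** Y"
proof -
  have "G ** X ** H = (G ** Gi) ** Y ** H + G ** Y ** (Hi ** H)"
    by (simp add: assms(3) mm_add_ldistrib mm_add_rdistrib matrix_mul_assoc)
  then show ?thesis by (simp add: assms(1,2))
qed

lemma key2:
  fixes G Gi H Hi Y Yi X :: "complex^'n^'n"
  assumes "G ** Gi = mat 1" "Gi ** G = mat 1" "H ** Hi = mat 1" "Hi ** H = mat 1"
    "Y ** Yi = mat 1" "Yi ** Y = mat 1" "X = Gi ** Y + Y ** Hi"
  shows "Y ** H ** (Yi ** X ** Yi) ** G ** Y = G ** X ** H"
proof -
  have "Y ** H ** (Yi ** X ** Yi) ** G ** Y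
      = Y ** H ** Yi ** Gi ** (Y ** Yi) ** G ** Y + Y ** H ** (Yi ** Y) ** Hi ** Yi ** G ** Y"
    by (simp add: assms(7) mm_add_ldistrib mm_add_rdistrib matrix_mul_assoc)
  also have "\<dots> = Y ** H ** Yi ** (Gi ** G) ** Y + Y ** (H ** Hi) ** Yi ** G ** Y"
    by (simp add: assms(5,6) matrix_mul_assoc)
  also have "\<dots> = Y ** H ** (Yi ** Y) + (Y ** Yi) ** G ** Y"
    by (simp add: assms(2,3) matrix_mul_assoc)
  also have "\<dots> = Y ** H + G ** Y" by (simp add: assms(5,6))
  finally show ?thesis using key1[OF assms(1,4,7)] by simp
qed

lemma abg_facts:
  "alpha A Th Pm Mho (Suc 0) = Th"
  "beta A Th Pm Mho (Suc 0) = matrix_inv Th ** Mho ** matrix_inv Th"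
  "gamma A Th Pm Mho 0 = Th"
  "gamma A Th Pm Mho (Suc m) = LA A (alpha A Th Pm Mho (Suc m) ** (if m = 0 then Pm else mat 1) ** gamma A Th Pm Mho m)"
  "alpha A Th Pm Mho (Suc (Suc m)) = gamma A Th Pm Mho (Suc m) ** beta A Th Pm Mho (Suc m)"
  "beta A Th Pm Mho (Suc (Suc m)) = matrix_inv (gamma A Th Pm Mho (Suc m)) ** alpha A Th Pm Mho (Suc m)
      ** (if m = 0 then Pm else mat 1) ** gamma A Th Pm Mho m ** matrix_inv (gamma A Th Pm Mho (Suc m))"
  by (simp_all add: alpha_def beta_def gamma_def Let_def prod.case_eq_if)

lemma main_claim:
  fixes A Th Pm Mho :: "real^'n^'n"
  assumes h: "hurwitz A" and th: "det Th \<noteq> 0" and lt: "A ** Th + Th ** transpose A + Mho = 0"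
    and gam: "\<forall>j\<ge>1. det (gamma A Th Pm Mho j) \<noteq> 0"
  shows "lprod (\<lambda>j. Gres A (\<i> * complex_of_real lam) ** cmat (alpha A Th Pm Mho j)) (Suc m)
           ** cmat Pm ** Gres A (\<i> * complex_of_real lam) ** cmat Mho ** ctrans (Gres A (\<i> * complex_of_real lam))
         = cmat (gamma A Th Pm Mho (Suc m)) ** ctrans (Gres A (\<i> * complex_of_real lam))
           ** cmat (beta A Th Pm Mho (Suc (Suc m)))
           ** lprod (\<lambda>j. Gres A (\<i> * complex_of_real lam) ** cmat (alpha A Th Pm Mho j)) (Suc (Suc m))"
proof -
  define s where "s = \<i> * complex_of_real lam"
  define G where "G = Gres A s"
  define H where "H = ctrans G"
  define Gi where "Gi = mat s - cmat A"
  define Hi where "Hi = mat (cnj s) - cmat (transpose A)"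
  define al where "al j = alpha A Th Pm Mho j" for j
  define be where "be j = beta A Th Pm Mho j" for j
  define ga where "ga j = gamma A Th Pm Mho j" for j
  define Xf where "Xf j = G ** cmat (al j)" for j
  define L where "L j = lprod Xf j" for j
  have Gi_inv: "invertible Gi"
  proof -
    have "det Gi \<noteq> 0"
    proof
      assume "det Gi = 0"
      then have "Re s < 0" using h unfolding hurwitz_def Gi_def by blast
      then show False by (simp add: s_def)
    qed
    then show ?thesis by (simp add: invertible_det_nz)
  qed
  have GGi: "G ** Gi = mat 1" "Gi ** G = mat 1"
    using matrix_inv_both[OF Gi_inv] by (simp_all add: G_def Gres_def Gi_def)
  have HHi: "H ** Hi = mat 1" "Hi ** H = mat 1"
  proof -
    have Hi: "Hi = ctrans Gi" by (simp add: Hi_def Gi_def ctrans_diff ctrans_mat ctrans_cmat)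
    show "H ** Hi = mat 1" using arg_cong[OF GGi(2), of ctrans] by (simp add: H_def Hi ctrans_mult ctrans_mat)
    show "Hi ** H = mat 1" using arg_cong[OF GGi(1), of ctrans] by (simp add: H_def Hi ctrans_mult ctrans_mat)
  qed
  have lyc: "cmat X = Gi ** cmat Y + cmat Y ** Hi" if e: "A ** Y + Y ** transpose A + X = 0" for X Y
  proof -
    have 1: "Gi ** cmat Y + cmat Y ** Hi = (mat s ** cmat Y + cmat Y ** mat (cnj s)) - (cmat A ** cmat Y + cmat Y ** cmat (transpose A))"
      by (simp add: Gi_def Hi_def mm_diff_ldistrib mm_diff_rdistrib algebra_simps)
    have 2: "mat s ** cmat Y + cmat Y ** mat (cnj s) = 0"
      by (simp add: mat_left mat_right vec_eq_iff s_def algebra_simps)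
    have "A ** Y + Y ** transpose A = - X" using e by (simp add: eq_neg_iff_add_eq_0)
    then have 3: "cmat A ** cmat Y + cmat Y ** cmat (transpose A) = - cmat X"
      by (metis cmat_add cmat_mult cmat_uminus)
    show ?thesis by (simp add: 1 2 3)
  qed
  have rinv: "cmat M ** cmat (matrix_inv M) = mat 1" "cmat (matrix_inv M) ** cmat M = mat 1"
    if "det M \<noteq> 0" for M :: "real^'n^'n"
  proof -
    have "invertible M" using that by (simp add: invertible_det_nz)
    from matrix_inv_both[OF this] show "cmat M ** cmat (matrix_inv M) = mat 1" "cmat (matrix_inv M) ** cmat M = mat 1"
      by (simp_all add: cmat_mat flip: cmat_mult)
  qed
  have k2: "cmat Y ** H ** (cmat (matrix_inv Y) ** cmat X ** cmat (matrix_inv Y)) ** G ** cmat Y = G ** cmat X ** H"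
    if "det Y \<noteq> 0" "A ** Y + Y ** transpose A + X = 0" for X Y
    by (rule key2[OF GGi HHi rinv[OF that(1)] lyc[OF that(2)]])
  have Lsuc: "L (Suc j) = G ** cmat (al (Suc j)) ** L j" for j by (simp add: L_def Xf_def)
  have lyg: "A ** ga (Suc j) + ga (Suc j) ** transpose A + al (Suc j) ** (if j = 0 then Pm else mat 1) ** ga j = 0" for j
    unfolding ga_def al_def abg_facts(4) by (rule lyapunov[OF h])
  have dg: "det (ga (Suc j)) \<noteq> 0" for j using gam by (simp add: ga_def)
  have claim: "L (Suc m) ** cmat Pm ** G ** cmat Mho ** H = cmat (ga (Suc m)) ** H ** cmat (be (Suc (Suc m))) ** L (Suc (Suc m))"
  proof (induction m)
    case 0
    define X1 where "X1 = Th ** Pm ** Th"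
    have e1: "cmat (ga (Suc 0)) ** H ** (cmat (matrix_inv (ga (Suc 0))) ** cmat X1 ** cmat (matrix_inv (ga (Suc 0)))) ** G ** cmat (ga (Suc 0)) = G ** cmat X1 ** H"
      using k2[OF dg[of 0] lyg[of 0]] by (simp add: X1_def al_def ga_def abg_facts)
    have e2: "cmat Th ** H ** (cmat (matrix_inv Th) ** cmat Mho ** cmat (matrix_inv Th)) ** G ** cmat Th = G ** cmat Mho ** H"
      by (rule k2[OF th lt])
    have "cmat (ga (Suc 0)) ** H ** cmat (be (Suc (Suc 0))) ** L (Suc (Suc 0))
        = (cmat (ga (Suc 0)) ** H ** (cmat (matrix_inv (ga (Suc 0))) ** cmat X1 ** cmat (matrix_inv (ga (Suc 0)))) ** G ** cmat (ga (Suc 0)))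
          ** (cmat (matrix_inv Th) ** cmat Mho ** cmat (matrix_inv Th)) ** G ** cmat Th"
      by (simp add: Lsuc L_def Xf_def X1_def be_def al_def ga_def abg_facts cmat_mult matrix_mul_assoc)
    also have "\<dots> = G ** cmat Th ** cmat Pm ** (cmat Th ** H ** (cmat (matrix_inv Th) ** cmat Mho ** cmat (matrix_inv Th)) ** G ** cmat Th)"
      by (simp only: e1) (simp add: X1_def cmat_mult matrix_mul_assoc)
    also have "\<dots> = L (Suc 0) ** cmat Pm ** G ** cmat Mho ** H"
      by (simp only: e2) (simp add: L_def Xf_def al_def abg_facts matrix_mul_assoc)
    finally show ?case by simp
  next
    case (Suc m)
    define X where "X = al (Suc m) ** ga m"
    have "ga (Suc m) = LA A (al (Suc m) ** (if m = 0 then Pm else mat 1) ** ga m)" by (simp add: ga_def al_def abg_facts)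
    have e1: "cmat (ga (Suc (Suc m))) ** H ** (cmat (matrix_inv (ga (Suc (Suc m)))) ** cmat X' ** cmat (matrix_inv (ga (Suc (Suc m))))) ** G ** cmat (ga (Suc (Suc m)))
        = G ** cmat X' ** H" if "X' = al (Suc (Suc m)) ** ga (Suc m)" for X'
      using k2[OF dg[of "Suc m"] lyg[of "Suc m"]] that by simp
    have "L (Suc (Suc m)) ** cmat Pm ** G ** cmat Mho ** H = G ** cmat (al (Suc (Suc m))) ** (L (Suc m) ** cmat Pm ** G ** cmat Mho ** H)"
      by (simp add: Lsuc matrix_mul_assoc)
    also have "\<dots> = G ** cmat (al (Suc (Suc m))) ** (cmat (ga (Suc m)) ** H ** cmat (be (Suc (Suc m))) ** L (Suc (Suc m)))"
      by (simp only: Suc.IH)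
    also have "\<dots> = G ** cmat (al (Suc (Suc m)) ** ga (Suc m)) ** H ** cmat (be (Suc (Suc m))) ** L (Suc (Suc m))"
      by (simp add: cmat_mult matrix_mul_assoc)
    also have "\<dots> = (cmat (ga (Suc (Suc m))) ** H ** (cmat (matrix_inv (ga (Suc (Suc m)))) ** cmat (al (Suc (Suc m)) ** ga (Suc m)) ** cmat (matrix_inv (ga (Suc (Suc m))))) ** G ** cmat (ga (Suc (Suc m))))
           ** cmat (be (Suc (Suc m))) ** L (Suc (Suc m))"
      by (simp only: e1[OF refl])
    also have "\<dots> = cmat (ga (Suc (Suc m))) ** H ** cmat (be (Suc (Suc (Suc m)))) ** L (Suc (Suc (Suc m)))"
      by (simp add: Lsuc be_def al_def ga_def abg_facts(5,6) cmat_mult matrix_mul_assoc)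
    finally show ?case .
  qed
  have XfE: "Xf = (\<lambda>j. Gres A (\<i> * complex_of_real lam) ** cmat (alpha A Th Pm Mho j))"
    by (simp add: fun_eq_iff Xf_def G_def s_def al_def)
  show ?thesis using claim unfolding L_def XfE H_def G_def s_def ga_def be_def .
qed

theorem lemma7p4:
  fixes Th A :: "real^'n^'n" and B :: "real^('k::finite \<times> 2)^'n" and C :: "real^'n^'r"
    and lam :: real and k :: nat
  assumes "even CARD('n)"
    and "transpose Th = - Th" and "det Th \<noteq> 0"
    and "hurwitz A"
    and "A ** Th + Th ** transpose A + B ** Jm ** transpose B = 0"
    and "\<forall>j\<ge>1. det (gamma A Th (transpose C ** C) (B ** Jm ** transpose B) j) \<noteq> 0"
    and "k \<ge> 1"
  shows "(let Mho = B ** Jm ** transpose B; Pm = transpose C ** C;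
              G = Gres A (\<i> * complex_of_real lam);
              X = (\<lambda>j. G ** cmat (alpha A Th Pm Mho j))
          in lprod X k ** cmat Pm ** G ** cmat Mho ** ctrans G
             = cmat (gamma A Th Pm Mho k) ** ctrans G ** cmat (beta A Th Pm Mho (k + 1))
               ** lprod X (k + 1))"
proof -
  obtain m where m: "k = Suc m" using assms(7) by (cases k) auto
  show ?thesis unfolding Let_def m
    using main_claim[OF assms(4) assms(3) assms(5) assms(6), of lam m] by simp
qed

end
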